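(* Let $a,b\in(0,+\infty)$ satisfy $1<a-b$ and $a+b<2$. Let $\varepsilon$ satisfy $$0<\varepsilon<\min\left\{1;\ \frac{a-1-b}{224\,b}\right\}\quad\text{and}\quad \varepsilon<\frac{2-a-b}{224\,b}.$$ Define $\varphi:\mathbb{R}\to\mathbb{R}$ by $$\varphi(t)=\begin{cases}\frac{3}{2}\pi & \text{if } t\in(-\infty,1],\\ \frac{3}{2}\pi+\varepsilon\ln\ln\big(e+(t-1)^4\big) & \text{if } t\in(1,+\infty),\end{cases}$$ and define $g$ on $[0,+\infty)$ by $g(t)=t^{a+b\sin(\varphi(t))}$. Then $$g''(t)-\frac{g'(t)}{t}\le\{224b\varepsilon+a-2+b\}\frac{g'(t)}{t}<0\qquad\forall t>0,$$ so in particular $\frac{g''(t)\,t}{g'(t)}\le 1$ for all $t>0$; moreover the function $t\mapsto\frac{g'(t)}{t}$ is strictly decreasing on $(0,+\infty)$.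
   Context: Here $e$ is Euler's number and $\ln$ the natural logarithm. The function $g$ belongs to $C^1([0,+\infty))\cap C^2((0,+\infty))$ and satisfies $g'(t)>0$ for $t>0$, so the quantities above are well defined. *)

theory Defs
  imports "HOL-Analysis.Analysis"
begin

definition phi5 :: "real \<Rightarrow> real \<Rightarrow> real" where
  "phi5 \<epsilon> t = (if t \<le> 1 then 3/2 * pi
                  else 3/2 * pi + \<epsilon> * ln (ln (exp 1 + (t - 1)^4)))"

definition g5 :: "real \<Rightarrow> real \<Rightarrow> real \<Rightarrow> real \<Rightarrow> real" where
  "g5 a b \<epsilon> t = t powr (a + b * sin (phi5 \<epsilon> t))"

end

theory Submission
  imports Defs
begin


definition ww :: "real \<Rightarrow> real" where "ww t = exp 1 + (t-1)^4"
definition ll :: "real \<Rightarrow> real" where "ll t = ln (ww t)"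
definition LL1 :: "real \<Rightarrow> real" where "LL1 t = 4*(t-1)^3/(ww t * ll t)"
definition LL2 :: "real \<Rightarrow> real" where
  "LL2 t = 12*(t-1)^2/(ww t * ll t) - 16*(t-1)^6*(ll t + 1)/((ww t)^2*(ll t)^2)"

lemma ww_ge: "ww t \<ge> exp 1" unfolding ww_def by simp
lemma ww_pos: "ww t > 0" using ww_ge[of t] using exp_gt_zero[of 1] by linarith
lemma ll_ge1: "ll t \<ge> 1"
  unfolding ll_def using ww_ge[of t] by (metis ln_exp ln_le_cancel_iff exp_gt_zero ww_pos)

lemma ww_deriv: "(ww has_real_derivative 4*(t-1)^3) (at t)"
  unfolding ww_def by (auto intro!: derivative_eq_intros)

lemma ll_deriv: "(ll has_real_derivative 4*(t-1)^3 / ww t) (at t)"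
proof -
  have "((\<lambda>t. ln (ww t)) has_real_derivative inverse (ww t) * (4*(t-1)^3)) (at t)"
    by (rule DERIV_chain2[OF DERIV_ln[OF ww_pos] ww_deriv])
  then show ?thesis unfolding ll_def[abs_def] by (simp add: divide_inverse mult.commute)
qed

lemma L_deriv: "((\<lambda>t. ln (ll t)) has_real_derivative LL1 t) (at t)"
proof -
  have p: "ll t > 0" using ll_ge1[of t] by auto
  have "((\<lambda>t. ln (ll t)) has_real_derivative inverse (ll t) * (4*(t-1)^3 / ww t)) (at t)"
    by (rule DERIV_chain2[OF DERIV_ln[OF p] ll_deriv])
  then show ?thesis unfolding LL1_def by (simp add: field_simps)
qed

lemma L1_deriv: "(LL1 has_real_derivative LL2 t) (at t)"
proof -
  have w: "ww t > 0" "ll t > 0" using ww_pos ll_ge1[of t] by auto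
  have "((\<lambda>t. 4*(t-1)^3/(ww t * ll t)) has_real_derivative
      ((4*(3*(t-1)^2)) * (ww t * ll t) - 4*(t-1)^3 * (4*(t-1)^3 * ll t + ww t * (4*(t-1)^3 / ww t))) / (ww t * ll t)^2) (at t)"
    using w by (auto intro!: derivative_eq_intros ww_deriv ll_deriv simp: power2_eq_square)
  moreover have "((4*(3*(t-1)^2)) * (ww t * ll t) - 4*(t-1)^3 * (4*(t-1)^3 * ll t + ww t * (4*(t-1)^3 / ww t))) / (ww t * ll t)^2 = LL2 t"
    unfolding LL2_def using w by (simp add: field_simps power2_eq_square)
  ultimately show ?thesis unfolding LL1_def[abs_def] by simp
qed

lemma glue:
  fixes f h :: "real \<Rightarrow> real"
  assumes "\<And>y. y \<le> x \<Longrightarrow> f y = 0" "\<And>y. y \<ge> x \<Longrightarrow> f y = h y"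
    "(h has_real_derivative 0) (at x)"
  shows "(f has_real_derivative 0) (at x)"
proof -
  have L: "(f has_real_derivative 0) (at x within {..<x})"
  proof -
    have "((\<lambda>_. 0::real) has_real_derivative 0) (at x within {..<x})" by simp
    moreover have "eventually (\<lambda>y. f y = 0) (at x within {..<x})"
      using assms(1) by (auto simp: eventually_at_filter)
    ultimately show ?thesis using has_field_derivative_cong_eventually[of f "\<lambda>_. 0" x "{..<x}" 0] assms(1)
      by simp
  qed
  have R: "(f has_real_derivative 0) (at x within {x<..})"
  proof -
    have "(h has_real_derivative 0) (at x within {x<..})"
      using assms(3) has_field_derivative_at_within by blast
    moreover have "eventually (\<lambda>y. f y = h y) (at x within {x<..})"
      using assms(2) by (auto simp: eventually_at_filter)
    ultimately show ?thesis using has_field_derivative_cong_eventually[of f h x "{x<..}" 0] assms(2)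
      by simp
  qed
  show ?thesis using L R unfolding has_field_derivative_iff
    by (simp add: filterlim_at_split)
qed

lemma pw_deriv:
  fixes h h' :: "real \<Rightarrow> real"
  assumes "\<And>t. (h has_real_derivative h' t) (at t)" "h 1 = 0" "h' 1 = 0"
  shows "((\<lambda>t. if t \<le> 1 then 0 else h t) has_real_derivative (if t \<le> 1 then 0 else h' t)) (at t)"
proof -
  consider "t < 1" | "t = 1" | "t > 1" by linarith
  then show ?thesis
  proof cases
    case 1
    have "((\<lambda>_. 0::real) has_real_derivative 0) (at t)" by simp
    then have "((\<lambda>t. if t \<le> 1 then 0 else h t) has_real_derivative 0) (at t)"
      by (rule has_field_derivative_transform_within_open[where S="{..<1}"]) (use 1 in auto)
    then show ?thesis using 1 by simp
  next
    case 2
    have "((\<lambda>t. if t \<le> 1 then 0 else h t) has_real_derivative 0) (at 1)"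
      by (rule glue[where h=h]) (use assms assms(1)[of 1] in auto)
    then show ?thesis using 2 by simp
  next
    case 3
    have "((\<lambda>t. if t \<le> 1 then 0 else h t) has_real_derivative h' t) (at t)"
      by (rule has_field_derivative_transform_within_open[where S="{1<..}", OF assms(1)]) (use 3 in auto)
    then show ?thesis using 3 by simp
  qed
qed

definition uu :: "real \<Rightarrow> real \<Rightarrow> real" where "uu e t = (if t \<le> 1 then 0 else e * ln (ll t))"
definition u1 :: "real \<Rightarrow> real \<Rightarrow> real" where "u1 e t = (if t \<le> 1 then 0 else e * LL1 t)"
definition u2 :: "real \<Rightarrow> real \<Rightarrow> real" where "u2 e t = (if t \<le> 1 then 0 else e * LL2 t)"

lemma ll1: "ll 1 = 1" unfolding ll_def ww_def by simp

lemma LL1_1: "LL1 1 = 0" unfolding LL1_def by simp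
lemma LL2_1: "LL2 1 = 0" unfolding LL2_def by simp

lemma uu_deriv: "(uu e has_real_derivative u1 e t) (at t)"
  unfolding uu_def[abs_def] u1_def
  by (rule pw_deriv) (auto intro!: DERIV_cmult L_deriv simp: ll1 LL1_1)

lemma u1_deriv: "(u1 e has_real_derivative u2 e t) (at t)"
  unfolding u1_def[abs_def] u2_def
  by (rule pw_deriv) (auto intro!: DERIV_cmult L1_deriv simp: LL1_1 LL2_1)

lemma phi_uu: "sin (phi5 e t) = - cos (uu e t)"
proof (cases "t \<le> 1")
  case True
  then have "phi5 e t = 3/2*pi" "uu e t = 0" unfolding phi5_def uu_def by auto
  then show ?thesis by (simp only: sin_3over2_pi cos_zero)
next
  case False
  then have "phi5 e t = 3/2*pi + uu e t" unfolding phi5_def uu_def ll_def ww_def by auto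
  then show ?thesis by (simp only: sin_add sin_3over2_pi cos_3over2_pi) simp?
qed

lemma poly1: fixes x :: real assumes "x \<ge> 0" shows "(1+x)*x^3 \<le> 7/4 * (exp 1 + x^4)"
proof -
  have "0 \<le> (x-1)^2*(3*x^2+2*x+1)" using assms by simp
  also have "(x-1)^2*(3*x^2+2*x+1) = 3*x^4 + 1 - 4*x^3" by algebra
  finally have a: "4*x^3 \<le> 3*x^4 + 1" by simp
  have e: "exp (1::real) \<ge> 1" by simp
  have "(1+x)*x^3 = x^3 + x^4" by algebra
  moreover have "x^3 + x^4 \<le> 7/4 * exp 1 + 7/4 * x^4" using a e by linarith
  ultimately show ?thesis by (simp add: distrib_left)
qed

lemma poly2: fixes x :: real assumes "x \<ge> 0" shows "(1+x)^2*x^2 \<le> 3 * (exp 1 + x^4)"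
proof -
  have "0 \<le> (x-1)^2*(3*x^2+2*x+1)" using assms by simp
  also have "(x-1)^2*(3*x^2+2*x+1) = 3*x^4 + 1 - 4*x^3" by algebra
  finally have a: "4*x^3 \<le> 3*x^4 + 1" by simp
  have "0 \<le> (x^2-1)^2" by simp
  also have "(x^2-1)^2 = x^4 + 1 - 2*x^2" by algebra
  finally have b: "2*x^2 \<le> x^4 + 1" by simp
  have e: "exp (1::real) \<ge> 1" by simp
  have "(1+x)^2*x^2 = x^2 + 2*x^3 + x^4" by algebra
  moreover have "x^2 + 2*x^3 + x^4 \<le> 3 * exp 1 + 3 * x^4" using a b e by linarith
  ultimately show ?thesis by (simp add: distrib_left)
qed

lemma t_le_ww: assumes "t > 1" shows "t \<le> ww t"
proof (cases "t \<le> 2")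
  case True
  have "exp (1::real) \<ge> 2" using exp_ge_add_one_self[of 1] by simp
  moreover have "(t-1)^4 \<ge> 0" by simp
  moreover have "\<And>E::real. 2 \<le> E \<Longrightarrow> (t-1)^4 \<ge> 0 \<Longrightarrow> t \<le> E + (t-1)^4" using True by linarith
  ultimately show ?thesis unfolding ww_def by simp
next
  case False
  then have "t - 1 \<ge> 1" by simp
  then have "(t-1)^1 \<le> (t-1)^4" by (intro power_increasing) auto
  then have "t-1 \<le> (t-1)^4" by simp
  moreover have "exp (1::real) \<ge> 1" by simp
  ultimately show ?thesis unfolding ww_def by linarith
qed

lemma lnt_le: assumes "t > 1" shows "0 \<le> ln t" "ln t \<le> ll t"
  using assms t_le_ww[OF assms] unfolding ll_def by auto


lemma bounds_gt1:
  assumes "t > 1"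
  shows "0 \<le> t * LL1 t" "t * LL1 t \<le> 7"
    "0 \<le> t * ln t * LL1 t" "t * ln t * LL1 t \<le> 7"
    "0 \<le> t^2 * ln t * (LL1 t)^2" "t^2 * ln t * (LL1 t)^2 \<le> 49"
    "\<bar>t^2 * ln t * LL2 t\<bar> \<le> 134"
proof -
  define w where "w = ww t"
  define l where "l = ll t"
  define Q where "Q = t*(t-1)^3/w"
  have w: "w > 0" unfolding w_def by (rule ww_pos)
  have l: "l \<ge> 1" unfolding l_def by (rule ll_ge1)
  have ln0: "0 \<le> ln t" and lnl: "ln t \<le> l" using lnt_le[OF assms] unfolding l_def by auto
  have Q0: "Q \<ge> 0" unfolding Q_def using assms w by simp
  have Q1: "Q \<le> 7/4"
  proof -
    have "t*(t-1)^3 \<le> 7/4 * w" using poly1[of "t-1"] assms unfolding w_def ww_def by simp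
    then show ?thesis unfolding Q_def using w by (simp add: field_simps)
  qed
  have R: "t^2*(t-1)^2/w \<le> 3"
  proof -
    have "t^2*(t-1)^2 \<le> 3 * w" using poly2[of "t-1"] assms unfolding w_def ww_def by simp
    then show ?thesis using w by (simp add: field_simps)
  qed
  have e1: "t * LL1 t = 4*Q/l" unfolding LL1_def Q_def w_def l_def by (simp add: field_simps)
  show a1: "0 \<le> t * LL1 t" using e1 Q0 l by simp
  have "4*Q/l \<le> 4*Q/1" using Q0 l by (intro divide_left_mono) auto
  then show "t * LL1 t \<le> 7" using e1 Q1 by linarith
  show "0 \<le> t * ln t * LL1 t" using a1 ln0 by (metis mult.commute mult.left_commute mult_nonneg_nonneg)
  have "t * ln t * LL1 t = ln t * (t * LL1 t)" by (simp add: ac_simps)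
  also have "\<dots> = ln t * (4*Q/l)" using e1 by simp
  also have "\<dots> \<le> l * (4*Q/l)" using lnl Q0 l by (intro mult_right_mono) auto
  also have "\<dots> = 4*Q" using l by simp
  finally show "t * ln t * LL1 t \<le> 7" using Q1 by linarith
  show "0 \<le> t^2 * ln t * (LL1 t)^2" using ln0 by simp
  have "t^2 * ln t * (LL1 t)^2 = ln t * (t * LL1 t)^2" by (simp add: algebra_simps power2_eq_square)
  also have "\<dots> = ln t * (4*Q/l)^2" using e1 by simp
  also have "\<dots> \<le> l * (4*Q/l)^2" using lnl by (intro mult_right_mono) auto
  also have "\<dots> = 16*Q^2/l" using l by (simp add: power_divide power2_eq_square)
  also have "\<dots> \<le> 16*Q^2/1" using l by (intro divide_left_mono) auto
  also have "\<dots> = 16*Q^2" by simp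
  also have "\<dots> \<le> 16*(7/4)^2" using Q0 Q1 by (intro mult_left_mono power_mono) auto
  also have "(16::real)*(7/4)^2 = 49" by (simp add: power2_eq_square)
  finally show "t^2 * ln t * (LL1 t)^2 \<le> 49" .
  define X where "X = 12*(t-1)^2/(w*l)"
  define Y where "Y = 16*(t-1)^6*(l + 1)/(w^2*l^2)"
  have X0: "X \<ge> 0" unfolding X_def using w l by simp
  have Y0: "Y \<ge> 0" unfolding Y_def using w l by simp
  have LL2: "LL2 t = X - Y" unfolding LL2_def X_def Y_def w_def l_def by simp
  have "\<bar>LL2 t\<bar> \<le> X + Y" using LL2 X0 Y0 by linarith
  have "\<bar>t^2 * ln t * LL2 t\<bar> = t^2 * ln t * \<bar>LL2 t\<bar>" using ln0 by (simp add: abs_mult)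
  also have "\<dots> \<le> t^2 * l * (X + Y)"
    using ln0 lnl \<open>\<bar>LL2 t\<bar> \<le> X + Y\<close> X0 Y0 by (intro mult_mono) auto
  also have "\<dots> = 12 * (t^2*(t-1)^2/w) + 16 * Q^2 * ((l+1)/l)"
    unfolding X_def Y_def Q_def using w l by (simp add: field_simps power2_eq_square)
  also have "\<dots> \<le> 12 * 3 + 16 * (7/4)^2 * 2"
  proof -
    have "(l+1)/l \<le> 2" using l by (simp add: divide_le_eq)
    moreover have "(l+1)/l \<ge> 0" using l by simp
    moreover have "Q^2 \<le> (7/4)^2" using Q0 Q1 by (intro power_mono) auto
    ultimately have "Q^2 * ((l+1)/l) \<le> (7/4)^2 * 2" by (intro mult_mono) auto
    then show ?thesis using R by linarith
  qed
  also have "(12::real) * 3 + 16 * (7/4)^2 * 2 = 134" by (simp add: power2_eq_square)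
  finally show "\<bar>t^2 * ln t * LL2 t\<bar> \<le> 134" .
qed



lemma ubounds:
  assumes "t > 0" "e \<ge> 0"
  shows "\<bar>t * ln t * u1 e t\<bar> \<le> 7*e" "\<bar>t * u1 e t\<bar> \<le> 7*e"
    "t^2 * ln t * (u1 e t)^2 \<le> 49*e^2" "\<bar>t^2 * ln t * u2 e t\<bar> \<le> 134*e"
proof -
  have "(\<bar>t * ln t * u1 e t\<bar> \<le> 7*e \<and> \<bar>t * u1 e t\<bar> \<le> 7*e \<and>
    t^2 * ln t * (u1 e t)^2 \<le> 49*e^2 \<and> \<bar>t^2 * ln t * u2 e t\<bar> \<le> 134*e)"
  proof (cases "t \<le> 1")
    case True
    then show ?thesis unfolding u1_def u2_def using assms by simp
  next
    case False
    then have t: "t > 1" by simp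
    note B = bounds_gt1[OF t]
    have L0: "LL1 t \<ge> 0" using B(1) t by (simp add: zero_le_mult_iff)
    have l0: "ln t \<ge> 0" using t by simp
    have 1: "\<bar>t * ln t * u1 e t\<bar> = e * (t * ln t * LL1 t)"
      unfolding u1_def using False assms B L0 l0 by (simp add: abs_mult algebra_simps)
    have 2: "\<bar>t * u1 e t\<bar> = e * (t * LL1 t)"
      unfolding u1_def using False assms B L0 l0 by (simp add: abs_mult algebra_simps)
    have 3: "t^2 * ln t * (u1 e t)^2 = e^2 * (t^2 * ln t * (LL1 t)^2)"
      unfolding u1_def using False by (simp add: algebra_simps power2_eq_square)
    have 4: "\<bar>t^2 * ln t * u2 e t\<bar> = e * \<bar>t^2 * ln t * LL2 t\<bar>"
      unfolding u2_def using False assms by (simp add: abs_mult algebra_simps)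
    have "e * (t * ln t * LL1 t) \<le> e * 7" "e * (t * LL1 t) \<le> e * 7"
      "e^2 * (t^2 * ln t * (LL1 t)^2) \<le> e^2 * 49" "e * \<bar>t^2 * ln t * LL2 t\<bar> \<le> e * 134"
      using B assms by (intro mult_left_mono; simp)+
    then show ?thesis unfolding 1 2 3 4 by (simp add: mult.commute)
  qed
  then show "\<bar>t * ln t * u1 e t\<bar> \<le> 7*e" "\<bar>t * u1 e t\<bar> \<le> 7*e"
    "t^2 * ln t * (u1 e t)^2 \<le> 49*e^2" "\<bar>t^2 * ln t * u2 e t\<bar> \<le> 134*e" by auto
qed

definition PP :: "real \<Rightarrow> real \<Rightarrow> real \<Rightarrow> real \<Rightarrow> real" where
  "PP a b e t = a - b * cos (uu e t)"
definition PP1 :: "real \<Rightarrow> real \<Rightarrow> real \<Rightarrow> real \<Rightarrow> real" where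
  "PP1 a b e t = b * sin (uu e t) * u1 e t"
definition PP2 :: "real \<Rightarrow> real \<Rightarrow> real \<Rightarrow> real \<Rightarrow> real" where
  "PP2 a b e t = b * (cos (uu e t) * (u1 e t)^2 + sin (uu e t) * u2 e t)"
definition q1 :: "real \<Rightarrow> real \<Rightarrow> real \<Rightarrow> real \<Rightarrow> real" where
  "q1 a b e t = PP1 a b e t * ln t + PP a b e t / t"
definition q2 :: "real \<Rightarrow> real \<Rightarrow> real \<Rightarrow> real \<Rightarrow> real" where
  "q2 a b e t = PP2 a b e t * ln t + 2 * PP1 a b e t / t - PP a b e t / t^2"
definition EE :: "real \<Rightarrow> real \<Rightarrow> real \<Rightarrow> real \<Rightarrow> real" where
  "EE a b e t = exp (PP a b e t * ln t)"

lemma PP_deriv: "(PP a b e has_real_derivative PP1 a b e t) (at t)"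
  unfolding PP_def[abs_def] PP1_def by (auto intro!: derivative_eq_intros uu_deriv)

lemma PP1_deriv: "(PP1 a b e has_real_derivative PP2 a b e t) (at t)"
  unfolding PP1_def[abs_def] PP2_def
  by (auto intro!: derivative_eq_intros uu_deriv u1_deriv simp: algebra_simps power2_eq_square)

lemma q1_deriv: assumes "t > 0" shows "(q1 a b e has_real_derivative q2 a b e t) (at t)"
  unfolding q1_def[abs_def] q2_def using assms
  by (auto intro!: derivative_eq_intros PP_deriv PP1_deriv simp: field_simps power2_eq_square)

lemma EE_deriv: assumes "t > 0" shows "(EE a b e has_real_derivative EE a b e t * q1 a b e t) (at t)"
  unfolding EE_def[abs_def] q1_def using assms
  by (auto intro!: derivative_eq_intros PP_deriv simp: field_simps)

lemma g_eq: assumes "t > 0" shows "g5 a b e t = EE a b e t"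
  unfolding g5_def EE_def PP_def phi_uu powr_def using assms by (simp add: mult.commute)

lemma g_deriv: assumes "t > 0" shows "(g5 a b e has_real_derivative EE a b e t * q1 a b e t) (at t)"
  by (rule has_field_derivative_transform_within_open[OF EE_deriv[OF assms], where S="{0<..}"])
    (use assms g_eq in auto)

lemma dg_eq: assumes "t > 0" shows "deriv (g5 a b e) t = EE a b e t * q1 a b e t"
  using g_deriv[OF assms] by (rule DERIV_imp_deriv)

lemma dg_deriv: assumes "t > 0"
  shows "(deriv (g5 a b e) has_real_derivative EE a b e t * ((q1 a b e t)^2 + q2 a b e t)) (at t)"
proof -
  have "((\<lambda>t. EE a b e t * q1 a b e t) has_real_derivative EE a b e t * ((q1 a b e t)^2 + q2 a b e t)) (at t)"
    using EE_deriv[OF assms] q1_deriv[OF assms]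
    by (auto intro!: derivative_eq_intros simp: algebra_simps power2_eq_square)
  then show ?thesis
    by (rule has_field_derivative_transform_within_open[where S="{0<..}"]) (use assms dg_eq in auto)
qed

lemma main_pt:
  fixes a b e t :: real
  assumes ab: "b > 0" "1 + 224*b*e < a - b" "0 < e" "e < 1" and t: "t > 0"
  defines "K \<equiv> 224 * b * e + a - 2 + b"
  shows "t * q1 a b e t \<ge> 1"
    and "EE a b e t * ((q1 a b e t)^2 + q2 a b e t) - EE a b e t * q1 a b e t / t
         \<le> K * (EE a b e t * q1 a b e t / t)"
proof -
  define U where "U = uu e t"
  define P where "P = PP a b e t"
  define P1 where "P1 = PP1 a b e t"
  define P2 where "P2 = PP2 a b e t"
  define E where "E = EE a b e t"
  define A where "A = t * q1 a b e t"
  define d where "d = t * ln t * P1"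
  define F where "F = t^2 * ln t * P2 + 2 * t * P1"
  note ub = ubounds[OF t less_imp_le[OF ab(3)]]
  have E0: "E > 0" unfolding E_def EE_def by simp
  have sin1: "\<bar>sin U\<bar> \<le> 1" and cos1: "\<bar>cos U\<bar> \<le> 1" by simp_all
  have Pge: "P \<ge> a - b" and Ple: "P \<le> a + b"
  proof -
    have c1: "cos U \<le> 1" "-1 \<le> cos U" using cos1 by (auto simp: abs_le_iff)
    have "b * cos U \<le> b * 1" using ab c1 by (intro mult_left_mono) auto
    moreover have "b * (-1) \<le> b * cos U" using ab c1 by (intro mult_left_mono) auto
    moreover have "P = a - b * cos U" unfolding P_def PP_def U_def ..
    ultimately show "P \<ge> a - b" "P \<le> a + b" by linarith+
  qed
  have dabs: "\<bar>d\<bar> \<le> b * (7*e)"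
  proof -
    have "d = b * (sin U * (t * ln t * u1 e t))"
      unfolding d_def P1_def PP1_def U_def by (simp add: algebra_simps)
    then have "\<bar>d\<bar> = b * (\<bar>sin U\<bar> * \<bar>t * ln t * u1 e t\<bar>)"
      using ab by (simp add: abs_mult)
    also have "\<dots> \<le> b * (1 * (7*e))"
      using ab sin1 ub(1) by (intro mult_left_mono mult_mono) auto
    finally show ?thesis by simp
  qed
  have Fabs: "\<bar>F\<bar> \<le> b * (197*e)"
  proof -
    have "t^2 * ln t * P2 = b * (cos U * (t^2 * ln t * (u1 e t)^2) + sin U * (t^2 * ln t * u2 e t))"
      unfolding P2_def PP2_def U_def by (simp add: algebra_simps)
    then have "\<bar>t^2 * ln t * P2\<bar> = b * \<bar>cos U * (t^2 * ln t * (u1 e t)^2) + sin U * (t^2 * ln t * u2 e t)\<bar>"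
      using ab by (simp add: abs_mult)
    also have "\<dots> \<le> b * (\<bar>cos U\<bar> * \<bar>t^2 * ln t * (u1 e t)^2\<bar> + \<bar>sin U\<bar> * \<bar>t^2 * ln t * u2 e t\<bar>)"
      using ab by (intro mult_left_mono) (auto simp: abs_mult[symmetric] abs_triangle_ineq)
    also have "\<dots> \<le> b * (1 * (49*e^2) + 1 * (134*e))"
    proof -
      have "t^2 * ln t * (u1 e t)^2 \<ge> 0"
      proof (cases "t \<le> 1")
        case True then show ?thesis unfolding u1_def by simp
      next
        case False then show ?thesis by simp
      qed
      then have "\<bar>t^2 * ln t * (u1 e t)^2\<bar> \<le> 49*e^2" using ub(3) by simp
      then show ?thesis using ab sin1 cos1 ub(4)
        by (intro mult_left_mono add_mono mult_mono) auto
    qed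
    also have "\<dots> \<le> b * (183*e)"
    proof -
      have "e^2 \<le> e" using ab by (simp add: power2_eq_square mult_le_cancel_right1 mult_left_le)
      then show ?thesis using ab by (intro mult_left_mono) auto
    qed
    finally have 1: "\<bar>t^2 * ln t * P2\<bar> \<le> b * (183*e)" .
    have eq2: "2 * t * P1 = 2 * b * (sin U * (t * u1 e t))"
      unfolding P1_def PP1_def U_def by (simp add: algebra_simps)
    have "\<bar>2 * t * P1\<bar> = 2 * b * (\<bar>sin U\<bar> * \<bar>t * u1 e t\<bar>)"
      using ab unfolding eq2 by (simp only: abs_mult abs_of_pos zero_less_numeral)
    also have "\<dots> \<le> 2 * b * (1 * (7*e))"
      using ab sin1 ub(2) by (intro mult_left_mono mult_mono) auto
    finally have 2: "\<bar>2 * t * P1\<bar> \<le> b * (14*e)" by simp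
    have "\<bar>F\<bar> \<le> \<bar>t^2 * ln t * P2\<bar> + \<bar>2 * t * P1\<bar>" unfolding F_def by (rule abs_triangle_ineq)
    then show ?thesis using 1 2 by (simp add: algebra_simps)
  qed
  have AdP: "A = P + d" unfolding A_def d_def q1_def P_def P1_def using t by (simp add: field_simps)
  have Q2: "t^2 * q2 a b e t = F - P" unfolding F_def q2_def P_def P1_def P2_def using t
    by (simp add: field_simps power2_eq_square)
  have A1: "A \<ge> 1" using AdP Pge dabs ab by (simp add: algebra_simps)
  then show "t * q1 a b e t \<ge> 1" unfolding A_def .
  define N where "N = A^2 + F - P - A - K*A"
  have Neq: "N = A*(P - a - b) + A*(d - 224*b*e) + d + F"
    unfolding N_def K_def using AdP by (simp add: algebra_simps power2_eq_square)
  have n1: "A*(P - a - b) \<le> 0" using A1 Ple by (intro mult_nonneg_nonpos) auto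
  have n2: "A*(d - 224*b*e) \<le> d - 224*b*e"
  proof -
    have "d - 224*b*e \<le> 0" using dabs ab by (simp add: algebra_simps)
    then have "(A - 1) * (d - 224*b*e) \<le> 0" using A1 by (intro mult_nonneg_nonpos) auto
    then show ?thesis by (simp add: algebra_simps)
  qed
  have N0: "N \<le> 0" using Neq n1 n2 dabs Fabs ab by (simp add: algebra_simps)
  have lhs: "E * ((q1 a b e t)^2 + q2 a b e t) - E * q1 a b e t / t - K * (E * q1 a b e t / t) = E / t^2 * N"
  proof -
    have h1: "q1 a b e t = A / t" unfolding A_def using t by simp
    have h2: "q2 a b e t = (F - P) / t^2" using Q2 t by (simp add: field_simps)
    show ?thesis unfolding h1 h2 N_def using t by (simp add: field_simps power2_eq_square)
  qed
  have "E / t^2 * N \<le> 0" using E0 t N0 by (intro mult_nonneg_nonpos) auto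
  then show "EE a b e t * ((q1 a b e t)^2 + q2 a b e t) - EE a b e t * q1 a b e t / t
         \<le> K * (EE a b e t * q1 a b e t / t)" using lhs unfolding E_def by linarith
qed

theorem theorem5p1:
  fixes a b \<epsilon> :: real
  assumes "a > 0" "b > 0" "1 < a - b" "a + b < 2"
    and "0 < \<epsilon>" "\<epsilon> < 1" "\<epsilon> < (a - 1 - b) / (224 * b)"
    and "\<epsilon> < (2 - a - b) / (224 * b)"
  defines "g \<equiv> g5 a b \<epsilon>"
  shows "(\<forall>t>0. (g has_real_derivative deriv g t) (at t)
              \<and> (deriv g has_real_derivative deriv (deriv g) t) (at t)
              \<and> deriv g t > 0)
       \<and> (\<forall>t>0. deriv (deriv g) t - deriv g t / t
                 \<le> (224 * b * \<epsilon> + a - 2 + b) * (deriv g t / t)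
              \<and> (224 * b * \<epsilon> + a - 2 + b) * (deriv g t / t) < 0)
       \<and> (\<forall>t>0. deriv (deriv g) t * t / deriv g t \<le> 1)
       \<and> (\<forall>s t. 0 < s \<and> s < t \<longrightarrow> deriv g t / t < deriv g s / s)"
proof -
  define K where "K = 224 * b * \<epsilon> + a - 2 + b"
  have bpos: "224 * b > 0" using assms(2) by simp
  have h1: "\<epsilon> * (224 * b) < a - 1 - b" using assms(7) bpos by (simp add: pos_less_divide_eq)
  have h2: "\<epsilon> * (224 * b) < 2 - a - b" using assms(8) bpos by (simp add: pos_less_divide_eq)
  have ab: "1 + 224*b*\<epsilon> < a - b" using h1 by (simp add: algebra_simps)
  have K0: "K < 0" unfolding K_def using h2 by (simp add: algebra_simps)
  have pt: "(g has_real_derivative deriv g t) (at t)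
          \<and> (deriv g has_real_derivative deriv (deriv g) t) (at t)
          \<and> deriv g t > 0
          \<and> deriv (deriv g) t - deriv g t / t \<le> K * (deriv g t / t)
          \<and> K * (deriv g t / t) < 0" if t: "t > 0" for t
  proof -
    note mp = main_pt[OF assms(2) ab assms(5) assms(6) t]
    have dg: "deriv g t = EE a b \<epsilon> t * q1 a b \<epsilon> t" unfolding g_def by (rule dg_eq[OF t])
    have D1: "(g has_real_derivative deriv g t) (at t)" unfolding dg unfolding g_def by (rule g_deriv[OF t])
    have D2': "(deriv g has_real_derivative EE a b \<epsilon> t * ((q1 a b \<epsilon> t)^2 + q2 a b \<epsilon> t)) (at t)"
      unfolding g_def by (rule dg_deriv[OF t])
    have ddg: "deriv (deriv g) t = EE a b \<epsilon> t * ((q1 a b \<epsilon> t)^2 + q2 a b \<epsilon> t)"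
      using D2' by (rule DERIV_imp_deriv)
    have D2: "(deriv g has_real_derivative deriv (deriv g) t) (at t)" using D2' unfolding ddg .
    have q: "q1 a b \<epsilon> t > 0"
    proof -
      have "t * q1 a b \<epsilon> t > 0" using mp(1) by linarith
      then show ?thesis using t by (simp add: zero_less_mult_iff)
    qed
    have E0: "EE a b \<epsilon> t > 0" unfolding EE_def by simp
    have pos: "deriv g t > 0" unfolding dg using q E0 by simp
    have ineq: "deriv (deriv g) t - deriv g t / t \<le> K * (deriv g t / t)"
      unfolding ddg dg K_def using mp(2) by simp
    have neg: "K * (deriv g t / t) < 0" using K0 pos t by (intro mult_neg_pos divide_pos_pos)
    show ?thesis using D1 D2 pos ineq neg by blast
  qed
  have c3: "deriv (deriv g) t * t / deriv g t \<le> 1" if t: "t > 0" for t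
  proof -
    have "deriv (deriv g) t < deriv g t / t" using pt[OF t] by linarith
    then have "deriv (deriv g) t * t < deriv g t" using t by (simp add: less_divide_eq)
    then show ?thesis using pt[OF t] by (simp add: divide_le_eq)
  qed
  have c4: "deriv g t / t < deriv g s / s" if st: "0 < s" "s < t" for s t
  proof -
    have "\<exists>y. ((\<lambda>x. deriv g x / x) has_real_derivative y) (at x) \<and> y < 0" if x: "s \<le> x" "x \<le> t" for x
    proof -
      have x0: "x > 0" using x st by linarith
      have "((\<lambda>x. deriv g x / x) has_real_derivative
          (deriv (deriv g) x * x - deriv g x * 1) / (x * x)) (at x)"
        using DERIV_divide[OF conjunct1[OF conjunct2[OF pt[OF x0]]] DERIV_ident] x0 by simp
      moreover have "(deriv (deriv g) x * x - deriv g x * 1) / (x * x) < 0"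
      proof -
        have "deriv (deriv g) x < deriv g x / x" using pt[OF x0] by linarith
        then have "deriv (deriv g) x * x < deriv g x" using x0 by (simp add: less_divide_eq)
        then show ?thesis using x0 by (simp add: divide_neg_pos)
      qed
      ultimately show ?thesis by blast
    qed
    then show ?thesis using DERIV_neg_imp_decreasing[OF st(2)] by blast
  qed
  show ?thesis using pt c3 c4 unfolding K_def by blast
qed

end
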